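(* Under the standing assumptions below, one of the following holds: (II') there exist maps $h_1:M\to M'$ and $p_1:N\to N'$ such that for all $m\in M$, $n\in N$: $\phi\left(\left[\begin{smallmatrix} 0 & m\\ 0 & 1\end{smallmatrix}\right]\right)=\left[\begin{smallmatrix} 0 & h_1(m)\\ p_1(0) & 1\end{smallmatrix}\right]$ and $\phi\left(\left[\begin{smallmatrix} 0 & 0\\ n & 1\end{smallmatrix}\right]\right)=\left[\begin{smallmatrix} 0 & h_1(0)\\ p_1(n) & 1\end{smallmatrix}\right]$; (II'') there exist maps $h_2:N\to M'$ and $p_2:M\to N'$ such that for all $m\in M$, $n\in N$: $\phi\left(\left[\begin{smallmatrix} 0 & m\\ 0 & 1\end{smallmatrix}\right]\right)=\left[\begin{smallmatrix} 1 & h_2(0)\\ p_2(m) & 0\end{smallmatrix}\right]$ and $\phi\left(\left[\begin{smallmatrix} 0 & 0\\ n & 1\end{smallmatrix}\right]\right)=\left[\begin{smallmatrix} 1 & h_2(n)\\ p_2(0) & 0\end{smallmatrix}\right]$.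
   Context: All rings have an identity $1\neq 0$. Standing assumptions: $R,S,R',S'$ are rings whose only idempotents are $0$ and $1$; $M$ is an $R$-$S$-bimodule, $N$ an $S$-$R$-bimodule, $M'$ an $R'$-$S'$-bimodule, $N'$ an $S'$-$R'$-bimodule; $T=\left[\begin{smallmatrix} R & M\\ N & S\end{smallmatrix}\right]$ and $T'=\left[\begin{smallmatrix} R' & M'\\ N' & S'\end{smallmatrix}\right]$ are the Morita context rings with both Morita maps zero, i.e. the sets of formal matrices with entrywise addition and product $\left[\begin{smallmatrix} r & m\\ n & s\end{smallmatrix}\right]\left[\begin{smallmatrix} r' & m'\\ n' & s'\end{smallmatrix}\right]=\left[\begin{smallmatrix} rr' & rm'+ms'\\ nr'+sn' & ss'\end{smallmatrix}\right]$; and $\phi:T\to T'$ is a ring isomorphism. *)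

theory Defs
  imports Main
begin

text \<open>Rings are modelled by types of class ring_1 (which includes 1 \<noteq> 0).
  An R-S-bimodule M is an abelian group type 'm with a left R-action and
  a right S-action satisfying the usual axioms.\<close>

definition only_trivial_idempotents :: "'a::ring_1 itself \<Rightarrow> bool" where
  "only_trivial_idempotents _ \<longleftrightarrow> (\<forall>x::'a. x * x = x \<longrightarrow> x = 0 \<or> x = 1)"

definition bimodule ::
  "('r::ring_1 \<Rightarrow> 'm::ab_group_add \<Rightarrow> 'm) \<Rightarrow> ('m \<Rightarrow> 's::ring_1 \<Rightarrow> 'm) \<Rightarrow> bool" where
  "bimodule lact ract \<longleftrightarrow>
     (\<forall>a b x. lact (a + b) x = lact a x + lact b x) \<and>
     (\<forall>a x y. lact a (x + y) = lact a x + lact a y) \<and>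
     (\<forall>a b x. lact (a * b) x = lact a (lact b x)) \<and>
     (\<forall>x. lact 1 x = x) \<and>
     (\<forall>x s t. ract x (s + t) = ract x s + ract x t) \<and>
     (\<forall>x y s. ract (x + y) s = ract x s + ract y s) \<and>
     (\<forall>x s t. ract x (s * t) = ract (ract x s) t) \<and>
     (\<forall>x. ract x 1 = x) \<and>
     (\<forall>a x s. lact a (ract x s) = ract (lact a x) s)"

text \<open>Formal 2x2 matrices [r m; n s] of the Morita context ring with zero Morita maps.\<close>
datatype ('r, 'm, 'n, 's) mat2 = Mat 'r 'm 'n 's

fun madd :: "('r::plus, 'm::plus, 'n::plus, 's::plus) mat2 \<Rightarrow> ('r, 'm, 'n, 's) mat2 \<Rightarrow> ('r, 'm, 'n, 's) mat2" where
  "madd (Mat r m n s) (Mat r' m' n' s') = Mat (r + r') (m + m') (n + n') (s + s')"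

text \<open>Product: [r m; n s][r' m'; n' s'] = [rr', rm' + ms'; nr' + sn', ss'].
  Parameters: lM (left R-action on M), rM (right S-action on M),
  lN (left S-action on N), rN (right R-action on N).\<close>
fun mmul :: "('r \<Rightarrow> 'm \<Rightarrow> 'm) \<Rightarrow> ('m \<Rightarrow> 's \<Rightarrow> 'm) \<Rightarrow> ('s \<Rightarrow> 'n \<Rightarrow> 'n) \<Rightarrow> ('n \<Rightarrow> 'r \<Rightarrow> 'n)
   \<Rightarrow> ('r::times, 'm::plus, 'n::plus, 's::times) mat2 \<Rightarrow> ('r, 'm, 'n, 's) mat2 \<Rightarrow> ('r, 'm, 'n, 's) mat2" where
  "mmul lM rM lN rN (Mat r m n s) (Mat r' m' n' s') =
     Mat (r * r') (lM r m' + rM m s') (rN n r' + lN s n') (s * s')"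

definition mone :: "('r::one, 'm::zero, 'n::zero, 's::one) mat2" where
  "mone = Mat 1 0 0 1"

definition ring_iso_mat ::
  "('r \<Rightarrow> 'm \<Rightarrow> 'm) \<Rightarrow> ('m \<Rightarrow> 's \<Rightarrow> 'm) \<Rightarrow> ('s \<Rightarrow> 'n \<Rightarrow> 'n) \<Rightarrow> ('n \<Rightarrow> 'r \<Rightarrow> 'n) \<Rightarrow>
   ('r2 \<Rightarrow> 'm2 \<Rightarrow> 'm2) \<Rightarrow> ('m2 \<Rightarrow> 's2 \<Rightarrow> 'm2) \<Rightarrow> ('s2 \<Rightarrow> 'n2 \<Rightarrow> 'n2) \<Rightarrow> ('n2 \<Rightarrow> 'r2 \<Rightarrow> 'n2) \<Rightarrow>
   (('r::ring_1, 'm::ab_group_add, 'n::ab_group_add, 's::ring_1) mat2 \<Rightarrow>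
    ('r2::ring_1, 'm2::ab_group_add, 'n2::ab_group_add, 's2::ring_1) mat2) \<Rightarrow> bool" where
  "ring_iso_mat lM rM lN rN lM' rM' lN' rN' \<phi> \<longleftrightarrow>
     bij \<phi> \<and>
     (\<forall>x y. \<phi> (madd x y) = madd (\<phi> x) (\<phi> y)) \<and>
     (\<forall>x y. \<phi> (mmul lM rM lN rN x y) = mmul lM' rM' lN' rN' (\<phi> x) (\<phi> y)) \<and>
     \<phi> mone = mone"

end

theory Submission
  imports Defs
begin

lemma bim_zero:
  assumes "bimodule l r"
  shows "l a 0 = 0" "l 0 x = 0" "r 0 s = 0" "r x 0 = 0" "l 1 x = x" "r x 1 = x"
proof -
  have A: "\<forall>a b x. l (a + b) x = l a x + l b x" "\<forall>a x y. l a (x + y) = l a x + l a y"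
    "\<forall>x s t. r x (s + t) = r x s + r x t" "\<forall>x y s. r (x + y) s = r x s + r y s"
    "\<forall>x. l 1 x = x" "\<forall>x. r x 1 = x"
    using assms unfolding bimodule_def by auto
  have "l a (0+0) = l a 0 + l a 0" using A by blast
  then show "l a 0 = 0" by simp
  have "l (0+0) x = l 0 x + l 0 x" using A by blast
  then show "l 0 x = 0" by simp
  have "r (0+0) s = r 0 s + r 0 s" using A by blast
  then show "r 0 s = 0" by simp
  have "r x (0+0) = r x 0 + r x 0" using A by blast
  then show "r x 0 = 0" by simp
  show "l 1 x = x" "r x 1 = x" using A by blast+
qed

fun g11 where "g11 (Mat r m n s) = r"
fun g12 where "g12 (Mat r m n s) = m"
fun g21 where "g21 (Mat r m n s) = n"
fun g22 where "g22 (Mat r m n s) = s"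

lemma mat_eta: "x = Mat (g11 x) (g12 x) (g21 x) (g22 x)"
  by (cases x) simp

theorem corollary4p6:
  fixes lM :: "'r::ring_1 \<Rightarrow> 'm::ab_group_add \<Rightarrow> 'm" and rM :: "'m \<Rightarrow> 's::ring_1 \<Rightarrow> 'm"
    and lN :: "'s \<Rightarrow> 'n::ab_group_add \<Rightarrow> 'n" and rN :: "'n \<Rightarrow> 'r \<Rightarrow> 'n"
    and lM' :: "'r2::ring_1 \<Rightarrow> 'm2::ab_group_add \<Rightarrow> 'm2" and rM' :: "'m2 \<Rightarrow> 's2::ring_1 \<Rightarrow> 'm2"
    and lN' :: "'s2 \<Rightarrow> 'n2::ab_group_add \<Rightarrow> 'n2" and rN' :: "'n2 \<Rightarrow> 'r2 \<Rightarrow> 'n2"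
    and \<phi> :: "('r, 'm, 'n, 's) mat2 \<Rightarrow> ('r2, 'm2, 'n2, 's2) mat2"
  assumes "only_trivial_idempotents TYPE('r)" and "only_trivial_idempotents TYPE('s)"
    and "only_trivial_idempotents TYPE('r2)" and "only_trivial_idempotents TYPE('s2)"
    and "bimodule lM rM" and "bimodule lN rN"
    and "bimodule lM' rM'" and "bimodule lN' rN'"
    and "ring_iso_mat lM rM lN rN lM' rM' lN' rN' \<phi>"
  shows "(\<exists>(h1 :: 'm \<Rightarrow> 'm2) (p1 :: 'n \<Rightarrow> 'n2). \<forall>m n.
            \<phi> (Mat 0 m 0 1) = Mat 0 (h1 m) (p1 0) 1 \<and>
            \<phi> (Mat 0 0 n 1) = Mat 0 (h1 0) (p1 n) 1)
       \<or> (\<exists>(h2 :: 'n \<Rightarrow> 'm2) (p2 :: 'm \<Rightarrow> 'n2). \<forall>m n.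
            \<phi> (Mat 0 m 0 1) = Mat 1 (h2 0) (p2 m) 0 \<and>
            \<phi> (Mat 0 0 n 1) = Mat 1 (h2 n) (p2 0) 0)"
proof -
  note z = bim_zero[OF assms(5)] bim_zero[OF assms(6)] bim_zero[OF assms(7)] bim_zero[OF assms(8)]
  have inj: "inj \<phi>" and add: "\<And>x y. \<phi> (madd x y) = madd (\<phi> x) (\<phi> y)"
    and mul: "\<And>x y. \<phi> (mmul lM rM lN rN x y) = mmul lM' rM' lN' rN' (\<phi> x) (\<phi> y)"
    and one: "\<phi> mone = mone"
    using assms(9) unfolding ring_iso_mat_def bij_def by blast+
  have r2: "\<And>x::'r2. x * x = x \<Longrightarrow> x = 0 \<or> x = 1" and s2: "\<And>x::'s2. x * x = x \<Longrightarrow> x = 0 \<or> x = 1"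
    using assms(3,4) unfolding only_trivial_idempotents_def by blast+
  define E :: "('r, 'm, 'n, 's) mat2" where "E = Mat 0 0 0 1"
  obtain a0 x0 y0 b0 where PE: "\<phi> E = Mat a0 x0 y0 b0" by (metis mat_eta)
  have "\<phi> (madd (Mat 0 0 0 0) (Mat 0 0 0 0)) = madd (\<phi> (Mat 0 0 0 0)) (\<phi> (Mat 0 0 0 0))" by (rule add)
  then have phi0: "\<phi> (Mat 0 0 0 0) = Mat 0 0 0 0"
    by (cases "\<phi> (Mat 0 0 0 0)") simp
  have "mmul lM rM lN rN E E = E" by (simp add: E_def z)
  then have "mmul lM' rM' lN' rN' (\<phi> E) (\<phi> E) = \<phi> E" by (metis mul)
  then have idem: "a0 * a0 = a0" "b0 * b0 = b0" "lM' a0 x0 + rM' x0 b0 = x0" "rN' y0 a0 + lN' b0 y0 = y0"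
    using PE by simp_all
  have ab0: "a0 = 0 \<or> a0 = 1" "b0 = 0 \<or> b0 = 1" using idem r2 s2 by blast+
  have n00: "\<not> (a0 = 0 \<and> b0 = 0)"
  proof
    assume h: "a0 = 0 \<and> b0 = 0"
    then have "x0 = 0" "y0 = 0" using idem z by simp_all
    then have "\<phi> E = \<phi> (Mat 0 0 0 0)" using PE phi0 h by simp
    then have "E = Mat 0 0 0 0" using inj by (meson injD)
    then show False by (simp add: E_def)
  qed
  have n11: "\<not> (a0 = 1 \<and> b0 = 1)"
  proof
    assume h: "a0 = 1 \<and> b0 = 1"
    then have "x0 + x0 = x0" "y0 + y0 = y0" using idem z by simp_all
    then have "x0 = 0" "y0 = 0" by simp_all
    then have "\<phi> E = \<phi> mone" using PE one h by (simp add: mone_def)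
    then have "E = mone" using inj by (meson injD)
    then show False by (simp add: E_def mone_def)
  qed
  have EM: "\<exists>a x y b. \<phi> (Mat 0 m 0 1) = Mat a x y b \<and> a * a0 = a \<and> b * b0 = b \<and>
     lM' a x0 + rM' x b0 = x \<and> rN' y a0 + lN' b y0 = y \<and> a0 * a = a0 \<and> b0 * b = b0 \<and>
     lM' a0 x + rM' x0 b = x0 \<and> rN' y0 a + lN' b0 y = y0" for m
  proof -
    obtain a x y b where P: "\<phi> (Mat 0 m 0 1) = Mat a x y b" by (metis mat_eta)
    have "mmul lM rM lN rN (Mat 0 m 0 1) E = Mat 0 m 0 1" "mmul lM rM lN rN E (Mat 0 m 0 1) = E"
      by (simp_all add: E_def z)
    then have "mmul lM' rM' lN' rN' (Mat a x y b) (Mat a0 x0 y0 b0) = Mat a x y b"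
       "mmul lM' rM' lN' rN' (Mat a0 x0 y0 b0) (Mat a x y b) = Mat a0 x0 y0 b0"
      using P PE by (metis mul)+
    then show ?thesis using P by auto
  qed
  have FN: "\<exists>a x y b. \<phi> (Mat 0 0 n 1) = Mat a x y b \<and> a * a0 = a0 \<and> b * b0 = b0 \<and>
     lM' a x0 + rM' x b0 = x0 \<and> rN' y a0 + lN' b y0 = y0 \<and> a0 * a = a \<and> b0 * b = b \<and>
     lM' a0 x + rM' x0 b = x \<and> rN' y0 a + lN' b0 y = y" for n
  proof -
    obtain a x y b where P: "\<phi> (Mat 0 0 n 1) = Mat a x y b" by (metis mat_eta)
    have "mmul lM rM lN rN (Mat 0 0 n 1) E = E" "mmul lM rM lN rN E (Mat 0 0 n 1) = Mat 0 0 n 1"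
      by (simp_all add: E_def z)
    then have "mmul lM' rM' lN' rN' (Mat a x y b) (Mat a0 x0 y0 b0) = Mat a0 x0 y0 b0"
       "mmul lM' rM' lN' rN' (Mat a0 x0 y0 b0) (Mat a x y b) = Mat a x y b"
      using P PE by (metis mul)+
    then show ?thesis using P by auto
  qed
  have E0: "Mat 0 0 0 1 = E" by (simp add: E_def)
  show ?thesis
  proof (cases "a0 = 0")
    case True
    then have b1: "b0 = 1" using ab0 n00 by blast
    have "\<phi> (Mat 0 m 0 1) = Mat 0 (g12 (\<phi> (Mat 0 m 0 1))) y0 1" for m
      using EM[of m] True b1 z by auto
    moreover have "\<phi> (Mat 0 0 n 1) = Mat 0 x0 (g21 (\<phi> (Mat 0 0 n 1))) 1" for n
      using FN[of n] True b1 z by auto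
    ultimately have "\<forall>m n. \<phi> (Mat 0 m 0 1) = Mat 0 ((\<lambda>m. g12 (\<phi> (Mat 0 m 0 1))) m) ((\<lambda>n. g21 (\<phi> (Mat 0 0 n 1))) 0) 1 \<and>
            \<phi> (Mat 0 0 n 1) = Mat 0 ((\<lambda>m. g12 (\<phi> (Mat 0 m 0 1))) 0) ((\<lambda>n. g21 (\<phi> (Mat 0 0 n 1))) n) 1"
      using PE True b1 E0 by simp
    then show ?thesis by (intro disjI1 exI)
  next
    case False
    then have a1: "a0 = 1" "b0 = 0" using ab0 n11 by blast+
    have "\<phi> (Mat 0 m 0 1) = Mat 1 x0 (g21 (\<phi> (Mat 0 m 0 1))) 0" for m
      using EM[of m] a1 z by auto
    moreover have "\<phi> (Mat 0 0 n 1) = Mat 1 (g12 (\<phi> (Mat 0 0 n 1))) y0 0" for n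
      using FN[of n] a1 z by auto
    ultimately have "\<forall>m n. \<phi> (Mat 0 m 0 1) = Mat 1 ((\<lambda>n. g12 (\<phi> (Mat 0 0 n 1))) 0) ((\<lambda>m. g21 (\<phi> (Mat 0 m 0 1))) m) 0 \<and>
            \<phi> (Mat 0 0 n 1) = Mat 1 ((\<lambda>n. g12 (\<phi> (Mat 0 0 n 1))) n) ((\<lambda>m. g21 (\<phi> (Mat 0 m 0 1))) 0) 0"
      using PE a1 E0 by simp
    then show ?thesis by (intro disjI2 exI)
  qed
qed

end
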